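(* All the symmetries $\chi_{2k+1}$, $k = 0, 1, \dots$, are local.
   Context: Consider the Calogero--Bogoyavlenskii--Schiff breaking soliton equation $u_{tx} = 2u_y u_{xx} + 4u_x u_{xy} - u_{xxxy}$. For $\mu=0$, the recursion operator $\Psi = \mathcal{R}_0(\Phi)$ for symmetries of this equation is defined by the system $\Psi_x = 4u_x\Phi_x + 2u_{xx}\Phi - \Phi_{xxx}$, $\Psi_y = \Phi_t - 2u_y\Phi_x + 2u_{xy}\Phi$ (so a priori its action may produce nonlocal objects). Define $\chi_1 := u_x$ and the symmetries $\chi_{2k+3}$ by the iterated action $\mathcal{R}_0(\chi_{2k+1}) = -\chi_{2k+3}$, $k\ge 0$; e.g. $\chi_3 = u_{xxx} - 3u_x^2$, $\chi_5 = u_{5x} - 5(2u_x(u_{xxx}-u_x^2) + u_{xx}^2)$. Since the equation is Lagrangian (with Lagrangian density $\frac12(m u_x^2u_y - u_xu_t + s u_{xx}u_{xy})$ in the appropriate parameter case), its symmetries are simultaneously cosymmetries, and there is an algorithm (Bogoyavlenskii) generating conservation laws associated to the cosymmetries $\chi_{2k+1}$. "Local" means depending only on $t,x,y,u$ and finitely many derivatives of $u$, with no nonlocal variables. *)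

theory Defs
  imports "HOL-Analysis.Analysis"
begin

type_synonym field3 = "real \<Rightarrow> real \<Rightarrow> real \<Rightarrow> real"

definition Dt :: "field3 \<Rightarrow> field3" where
  "Dt f = (\<lambda>t x y. deriv (\<lambda>s. f s x y) t)"
definition Dx :: "field3 \<Rightarrow> field3" where
  "Dx f = (\<lambda>t x y. deriv (\<lambda>s. f t s y) x)"
definition Dy :: "field3 \<Rightarrow> field3" where
  "Dy f = (\<lambda>t x y. deriv (\<lambda>s. f t x s) y)"

definition pd :: "nat \<Rightarrow> nat \<Rightarrow> nat \<Rightarrow> field3 \<Rightarrow> field3" where
  "pd i j l f = (Dt ^^ i) ((Dx ^^ j) ((Dy ^^ l) f))"

definition smooth3 :: "field3 \<Rightarrow> bool" where
  "smooth3 f \<longleftrightarrow> (\<forall>i j l. (\<lambda>p. pd i j l f (fst p) (fst (snd p)) (snd (snd p)))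
        differentiable_on (UNIV :: (real \<times> real \<times> real) set))"

definition jet :: "field3 \<Rightarrow> real \<Rightarrow> real \<Rightarrow> real \<Rightarrow> (nat \<times> nat \<times> nat \<Rightarrow> real)" where
  "jet u t x y = (\<lambda>(i,j,l). pd i j l u t x y)"

type_synonym jetfun = "real \<Rightarrow> real \<Rightarrow> real \<Rightarrow> (nat \<times> nat \<times> nat \<Rightarrow> real) \<Rightarrow> real"

definition local_fun :: "jetfun \<Rightarrow> bool" where
  "local_fun F \<longleftrightarrow> (\<exists>S. finite S \<and> (\<forall>t x y J J'. (\<forall>\<sigma>\<in>S. J \<sigma> = J' \<sigma>) \<longrightarrow> F t x y J = F t x y J'))"

definition eval_on :: "jetfun \<Rightarrow> field3 \<Rightarrow> field3" where
  "eval_on F u = (\<lambda>t x y. F t x y (jet u t x y))"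

definition CBS_solution :: "field3 \<Rightarrow> bool" where
  "CBS_solution u \<longleftrightarrow> smooth3 u \<and>
     (\<forall>t x y. pd 1 1 0 u t x y = 2 * pd 0 0 1 u t x y * pd 0 2 0 u t x y
        + 4 * pd 0 1 0 u t x y * pd 0 1 1 u t x y - pd 0 3 1 u t x y)"

text \<open>Psi = R_0(Phi) for mu = 0 along a solution u:
  Psi_x = 4 u_x Phi_x + 2 u_xx Phi - Phi_xxx,  Psi_y = Phi_t - 2 u_y Phi_x + 2 u_xy Phi.\<close>
definition recursion_R0 :: "field3 \<Rightarrow> field3 \<Rightarrow> field3 \<Rightarrow> bool" where
  "recursion_R0 u Phi Psi \<longleftrightarrow>
     (\<forall>t x y.
        Dx Psi t x y = 4 * pd 0 1 0 u t x y * Dx Phi t x y + 2 * pd 0 2 0 u t x y * Phi t x y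
                       - (Dx ^^ 3) Phi t x y
      \<and> Dy Psi t x y = Dt Phi t x y - 2 * pd 0 0 1 u t x y * Dx Phi t x y
                       + 2 * pd 0 1 1 u t x y * Phi t x y)"

end

theory Submission
  imports Defs "HOL-Library.Function_Algebras" "HOL-Computational_Algebra.Formal_Power_Series"
begin


lemma schwarz:
  fixes g ga gb gba :: "real \<Rightarrow> real \<Rightarrow> real" and a b cab :: real
  assumes d1: "\<And>x y. ((\<lambda>s. g s y) has_real_derivative ga x y) (at x)"
    and d2: "\<And>x y. ((\<lambda>s. g x s) has_real_derivative gb x y) (at y)"
    and d21: "\<And>x y. ((\<lambda>s. gb s y) has_real_derivative gba x y) (at x)"
    and d12: "((\<lambda>s. ga a s) has_real_derivative cab) (at b)"
    and cont: "continuous_on UNIV (\<lambda>p. gba (fst p) (snd p))"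
  shows "cab = gba a b"
proof (rule ccontr)
  assume ne: "cab \<noteq> gba a b"
  define c where "c = gba a b"
  define e where "e = \<bar>cab - c\<bar> / 2"
  have e: "e > 0" using ne by (simp add: e_def c_def)
  have "continuous (at (a,b)) (\<lambda>p. gba (fst p) (snd p))"
    using cont by (simp add: continuous_on_eq_continuous_at)
  then obtain d where d: "d > 0" "\<And>p. dist p (a,b) < d \<Longrightarrow> dist (gba (fst p) (snd p)) c < e"
    using e unfolding continuous_at_eps_delta c_def by fastforce
  have key: "\<bar>(g (a+h) (b+k) - g (a+h) b - g a (b+k) + g a b) / (h*k) - c\<bar> < e"
    if hk: "0<h" "h<d/2" "0<k" "k<d/2" for h k
  proof -
    obtain \<eta> where \<eta>: "b < \<eta>" "\<eta> < b+k" and eq1: "(g (a+h) (b+k) - g a (b+k)) - (g (a+h) b - g a b) = ((b+k) - b) * (gb (a+h) \<eta> - gb a \<eta>)"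
      using MVT2[of b "b+k" "\<lambda>s. g (a+h) s - g a s" "\<lambda>s. gb (a+h) s - gb a s"] hk d2
      by (auto intro!: derivative_eq_intros)
    obtain \<xi> where \<xi>: "a < \<xi>" "\<xi> < a+h" and eq2: "gb (a+h) \<eta> - gb a \<eta> = ((a+h) - a) * gba \<xi> \<eta>"
      using MVT2[of a "a+h" "\<lambda>s. gb s \<eta>" "\<lambda>s. gba s \<eta>"] hk d21 by auto
    have "dist (\<xi>,\<eta>) (a,b) \<le> \<bar>dist \<xi> a\<bar> + \<bar>dist \<eta> b\<bar>"
      unfolding dist_Pair_Pair by (rule sqrt_sum_squares_le_sum_abs)
    also have "\<dots> < d" using \<xi> \<eta> hk by (simp add: dist_real_def)
    finally have "dist (gba \<xi> \<eta>) c < e" using d(2)[of "(\<xi>,\<eta>)"] by simp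
    moreover have "(g (a+h) (b+k) - g (a+h) b - g a (b+k) + g a b) / (h*k) = gba \<xi> \<eta>"
      using eq1 eq2 hk by (simp add: field_simps)
    ultimately show ?thesis by (simp add: dist_real_def)
  qed
  have step1: "\<bar>(ga a (b+k) - ga a b)/k - c\<bar> \<le> e" if k: "0<k" "k<d/2" for k
  proof -
    have A: "((\<lambda>h. (g (a+h) (b+k) - g a (b+k))/h) \<longlongrightarrow> ga a (b+k)) (at 0)"
      using d1[where x=a and y="b+k"] unfolding DERIV_def by simp
    have B: "((\<lambda>h. (g (a+h) b - g a b)/h) \<longlongrightarrow> ga a b) (at 0)"
      using d1[where x=a and y=b] unfolding DERIV_def by simp
    have "((\<lambda>h. ((g (a+h) (b+k) - g a (b+k))/h - (g (a+h) b - g a b)/h)/k) \<longlongrightarrow> (ga a (b+k) - ga a b)/k) (at 0)"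
      using k by (auto intro!: tendsto_intros A B)
    then have "((\<lambda>h. ((g (a+h) (b+k) - g a (b+k))/h - (g (a+h) b - g a b)/h)/k) \<longlongrightarrow> (ga a (b+k) - ga a b)/k) (at_right 0)"
      by (rule tendsto_mono[rotated]) (simp add: at_within_le_at)
    then have "((\<lambda>h. \<bar>((g (a+h) (b+k) - g a (b+k))/h - (g (a+h) b - g a b)/h)/k - c\<bar>) \<longlongrightarrow> \<bar>(ga a (b+k) - ga a b)/k - c\<bar>) (at_right 0)"
      by (rule tendsto_rabs[OF tendsto_diff[OF _ tendsto_const]])
    moreover have "eventually (\<lambda>h. \<bar>((g (a+h) (b+k) - g a (b+k))/h - (g (a+h) b - g a b)/h)/k - c\<bar> \<le> e) (at_right 0)"
    proof -
      have "eventually (\<lambda>h. h \<in> {0<..<d/2}) (at_right (0::real))"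
        using d by (intro eventually_at_right_real) simp
      then show ?thesis
      proof (rule eventually_mono)
        fix h assume h: "h \<in> {0<..<d/2}"
        have "((g (a+h) (b+k) - g a (b+k))/h - (g (a+h) b - g a b)/h)/k = (g (a+h) (b+k) - g (a+h) b - g a (b+k) + g a b) / (h*k)"
          using h k by (simp add: field_simps)
        then show "\<bar>((g (a+h) (b+k) - g a (b+k))/h - (g (a+h) b - g a b)/h)/k - c\<bar> \<le> e"
          using key[of h k] h k by simp
      qed
    qed
    ultimately show ?thesis by (rule tendsto_upperbound) simp
  qed
  have "((\<lambda>k. (ga a (b+k) - ga a b)/k) \<longlongrightarrow> cab) (at 0)"
    using d12 unfolding DERIV_def by simp
  then have "((\<lambda>k. (ga a (b+k) - ga a b)/k) \<longlongrightarrow> cab) (at_right 0)"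
    by (rule tendsto_mono[rotated]) (simp add: at_within_le_at)
  then have "((\<lambda>k. \<bar>(ga a (b+k) - ga a b)/k - c\<bar>) \<longlongrightarrow> \<bar>cab - c\<bar>) (at_right 0)"
    by (rule tendsto_rabs[OF tendsto_diff[OF _ tendsto_const]])
  moreover have "eventually (\<lambda>k. \<bar>(ga a (b+k) - ga a b)/k - c\<bar> \<le> e) (at_right 0)"
  proof -
    have "eventually (\<lambda>h. h \<in> {0<..<d/2}) (at_right (0::real))"
      using d by (intro eventually_at_right_real) simp
    then show ?thesis by (rule eventually_mono) (use step1 in auto)
  qed
  ultimately have "\<bar>cab - c\<bar> \<le> e" by (rule tendsto_upperbound) simp
  then show False using e unfolding e_def by simp
qed


definition tr :: "field3 \<Rightarrow> real \<times> real \<times> real \<Rightarrow> real" where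
  "tr f = (\<lambda>p. f (fst p) (fst (snd p)) (snd (snd p)))"
definition diff3 :: "field3 \<Rightarrow> bool" where
  "diff3 f \<longleftrightarrow> tr f differentiable_on UNIV"

lemma smooth3_diff3: "smooth3 f \<longleftrightarrow> (\<forall>i j l. diff3 (pd i j l f))"
  unfolding smooth3_def diff3_def tr_def ..

lemma diff3_at: "diff3 f \<Longrightarrow> tr f differentiable (at p)"
  unfolding diff3_def differentiable_on_def by (cases p) auto

lemma diff3_Dt: assumes "diff3 f" shows "((\<lambda>s. f s x y) has_real_derivative Dt f t x y) (at t)"
proof -
  have "(\<lambda>s. (s,x,y)) differentiable (at t)"
    by (rule differentiableI) (auto intro!: derivative_eq_intros)
  from differentiable_chain_at[OF this diff3_at[OF assms]]
  have "(\<lambda>s. f s x y) differentiable (at t)" by (simp add: o_def tr_def)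
  then show ?thesis unfolding Dt_def by (simp add: DERIV_deriv_iff_real_differentiable)
qed

lemma diff3_Dx: assumes "diff3 f" shows "((\<lambda>s. f t s y) has_real_derivative Dx f t x y) (at x)"
proof -
  have "(\<lambda>s. (t,s,y)) differentiable (at x)"
    by (rule differentiableI) (auto intro!: derivative_eq_intros)
  from differentiable_chain_at[OF this diff3_at[OF assms]]
  have "(\<lambda>s. f t s y) differentiable (at x)" by (simp add: o_def tr_def)
  then show ?thesis unfolding Dx_def by (simp add: DERIV_deriv_iff_real_differentiable)
qed

lemma diff3_Dy: assumes "diff3 f" shows "((\<lambda>s. f t x s) has_real_derivative Dy f t x y) (at y)"
proof -
  have "(\<lambda>s. (t,x,s)) differentiable (at y)"
    by (rule differentiableI) (auto intro!: derivative_eq_intros)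
  from differentiable_chain_at[OF this diff3_at[OF assms]]
  have "(\<lambda>s. f t x s) differentiable (at y)" by (simp add: o_def tr_def)
  then show ?thesis unfolding Dy_def by (simp add: DERIV_deriv_iff_real_differentiable)
qed

lemma diff3_cont: "diff3 f \<Longrightarrow> continuous_on UNIV (tr f)"
  unfolding diff3_def by (rule differentiable_imp_continuous_on)

lemma cont_sub:
  assumes "diff3 f" and "\<And>p. q p = tr f (h p)" and "continuous_on UNIV h"
  shows "continuous_on UNIV q"
proof -
  have "continuous_on UNIV (tr f \<circ> h)"
    using continuous_on_compose[OF assms(3), of "tr f"] diff3_cont[OF assms(1)]
    by (simp add: continuous_on_subset)
  moreover have "q = tr f \<circ> h" using assms(2) by (simp add: fun_eq_iff)
  ultimately show ?thesis by simp
qed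

lemma comm_xy:
  assumes "diff3 g" "diff3 (Dx g)" "diff3 (Dy g)" "diff3 (Dx (Dy g))"
  shows "Dy (Dx g) = Dx (Dy g)"
proof (intro ext)
  fix t x y
  show "Dy (Dx g) t x y = Dx (Dy g) t x y"
  proof (rule schwarz[where g="\<lambda>a b. g t a b" and ga="\<lambda>a b. Dx g t a b"
        and gb="\<lambda>a b. Dy g t a b" and gba="\<lambda>a b. Dx (Dy g) t a b"])
    show "continuous_on UNIV (\<lambda>p. Dx (Dy g) t (fst p) (snd p))"
      by (rule cont_sub[OF assms(4), where h="\<lambda>p. (t, fst p, snd p)"])
         (auto simp: tr_def intro!: continuous_intros)
  qed (auto intro: diff3_Dx diff3_Dy assms)
qed

lemma comm_tx:
  assumes "diff3 g" "diff3 (Dt g)" "diff3 (Dx g)" "diff3 (Dt (Dx g))"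
  shows "Dx (Dt g) = Dt (Dx g)"
proof (intro ext)
  fix t x y
  show "Dx (Dt g) t x y = Dt (Dx g) t x y"
  proof (rule schwarz[where g="\<lambda>a b. g a b y" and ga="\<lambda>a b. Dt g a b y"
        and gb="\<lambda>a b. Dx g a b y" and gba="\<lambda>a b. Dt (Dx g) a b y"])
    show "continuous_on UNIV (\<lambda>p. Dt (Dx g) (fst p) (snd p) y)"
      by (rule cont_sub[OF assms(4), where h="\<lambda>p. (fst p, snd p, y)"])
         (auto simp: tr_def intro!: continuous_intros)
  qed (auto intro: diff3_Dx diff3_Dt assms)
qed

lemma comm_ty:
  assumes "diff3 g" "diff3 (Dt g)" "diff3 (Dy g)" "diff3 (Dt (Dy g))"
  shows "Dy (Dt g) = Dt (Dy g)"
proof (intro ext)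
  fix t x y
  show "Dy (Dt g) t x y = Dt (Dy g) t x y"
  proof (rule schwarz[where g="\<lambda>a b. g a x b" and ga="\<lambda>a b. Dt g a x b"
        and gb="\<lambda>a b. Dy g a x b" and gba="\<lambda>a b. Dt (Dy g) a x b"])
    show "continuous_on UNIV (\<lambda>p. Dt (Dy g) (fst p) x (snd p))"
      by (rule cont_sub[OF assms(4), where h="\<lambda>p. (fst p, x, snd p)"])
         (auto simp: tr_def intro!: continuous_intros)
  qed (auto intro: diff3_Dy diff3_Dt assms)
qed


definition isD :: "(field3 \<Rightarrow> field3) \<Rightarrow> bool" where
  "isD D \<longleftrightarrow> D = Dt \<or> D = Dx \<or> D = Dy"

lemma isD_simps[simp]: "isD Dt" "isD Dx" "isD Dy" by (auto simp: isD_def)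

lemma D_deriv:
  assumes "isD D" "diff3 a" "diff3 b"
  shows "D (a + b) = D a + D b" "D (a * b) = D a * b + a * D b"
proof -
  have "D (a + b) t x y = D a t x y + D b t x y \<and> D (a * b) t x y = D a t x y * b t x y + a t x y * D b t x y" for t x y
    using assms(1) unfolding isD_def
  proof (elim disjE)
    assume D: "D = Dt"
    have "((\<lambda>s. a s x y + b s x y) has_real_derivative Dt a t x y + Dt b t x y) (at t)"
      "((\<lambda>s. a s x y * b s x y) has_real_derivative Dt a t x y * b t x y + a t x y * Dt b t x y) (at t)"
      using diff3_Dt[OF assms(2)] diff3_Dt[OF assms(3)] by (auto intro!: derivative_eq_intros)
    then show ?thesis unfolding D by (auto simp: Dt_def intro!: DERIV_imp_deriv)
  next
    assume D: "D = Dx"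
    have "((\<lambda>s. a t s y + b t s y) has_real_derivative Dx a t x y + Dx b t x y) (at x)"
      "((\<lambda>s. a t s y * b t s y) has_real_derivative Dx a t x y * b t x y + a t x y * Dx b t x y) (at x)"
      using diff3_Dx[OF assms(2)] diff3_Dx[OF assms(3)] by (auto intro!: derivative_eq_intros)
    then show ?thesis unfolding D by (auto simp: Dx_def intro!: DERIV_imp_deriv)
  next
    assume D: "D = Dy"
    have "((\<lambda>s. a t x s + b t x s) has_real_derivative Dy a t x y + Dy b t x y) (at y)"
      "((\<lambda>s. a t x s * b t x s) has_real_derivative Dy a t x y * b t x y + a t x y * Dy b t x y) (at y)"
      using diff3_Dy[OF assms(2)] diff3_Dy[OF assms(3)] by (auto intro!: derivative_eq_intros)
    then show ?thesis unfolding D by (auto simp: Dy_def intro!: DERIV_imp_deriv)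
  qed
  then show "D (a + b) = D a + D b" "D (a * b) = D a * b + a * D b" by (auto simp: fun_eq_iff)
qed

lemma D_const:
  assumes "isD D" "\<And>t x y. f t x y = c" shows "D f = 0"
proof -
  have f: "f = (\<lambda>_ _ _. c)" using assms(2) by (simp add: fun_eq_iff)
  show ?thesis using assms(1) unfolding isD_def f by (auto simp: Dt_def Dx_def Dy_def fun_eq_iff)
qed

lemma diff3_add: "diff3 a \<Longrightarrow> diff3 b \<Longrightarrow> diff3 (a + b)"
  unfolding diff3_def tr_def by (simp add: differentiable_on_add)
lemma diff3_mult: "diff3 a \<Longrightarrow> diff3 b \<Longrightarrow> diff3 (a * b)"
  unfolding diff3_def tr_def by (simp add: differentiable_on_mult)
lemma diff3_const: "(\<And>t x y. f t x y = c) \<Longrightarrow> diff3 f"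
  unfolding diff3_def tr_def by simp

lemma pd_peel_y: "pd i j (Suc l) h = pd i j l (Dy h)"
  by (simp only: pd_def funpow_Suc_right o_apply)
lemma pd_peel_x: "pd i (Suc j) 0 h = pd i j 0 (Dx h)"
  by (simp only: pd_def funpow_Suc_right o_apply funpow_0)
lemma pd_peel_t: "pd (Suc i) 0 0 h = pd i 0 0 (Dt h)"
  by (simp only: pd_def funpow_Suc_right o_apply funpow_0)

lemma pd_peel:
  assumes "i + j + l = Suc m"
  shows "\<exists>D i' j' l'. isD D \<and> i' + j' + l' = m \<and> (\<forall>h. pd i j l h = pd i' j' l' (D h))"
proof (cases l)
  case (Suc l') then show ?thesis using assms by (intro exI[of _ Dy] exI[of _ i] exI[of _ j] exI[of _ l']) (simp add: pd_peel_y)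
next
  case 0
  show ?thesis
  proof (cases j)
    case (Suc j') then show ?thesis using assms 0 by (intro exI[of _ Dx] exI[of _ i] exI[of _ j'] exI[of _ 0]) (simp add: pd_peel_x)
  next
    assume j0: "j = 0"
    then obtain i' where "i = Suc i'" using assms `l = 0` by (cases i) auto
    then show ?thesis using assms 0 j0 by (intro exI[of _ Dt] exI[of _ i'] exI[of _ 0] exI[of _ 0]) (simp add: pd_peel_t)
  qed
qed

lemma pd_Dt: "Dt (pd i j l f) = pd (Suc i) j l f"
  by (simp add: pd_def)

lemma smooth_Dx_pd: assumes "smooth3 f" shows "Dx (pd i j l f) = pd i (Suc j) l f"
proof (induction i)
  case 0 then show ?case by (simp add: pd_def)
next
  case (Suc i)
  have d: "diff3 (pd i j l f)" "diff3 (Dt (pd i j l f))" "diff3 (Dx (pd i j l f))" "diff3 (Dt (Dx (pd i j l f)))"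
    using assms unfolding smooth3_diff3 Suc pd_Dt by auto
  have "Dx (pd (Suc i) j l f) = Dx (Dt (pd i j l f))" by (simp add: pd_Dt)
  also have "\<dots> = Dt (Dx (pd i j l f))" by (rule comm_tx[OF d])
  also have "\<dots> = pd (Suc i) (Suc j) l f" by (simp add: Suc pd_Dt)
  finally show ?case .
qed

lemma smooth_Dy_pd: assumes "smooth3 f" shows "Dy (pd i j l f) = pd i j (Suc l) f"
proof (induction i)
  case 0
  show ?case
  proof (induction j)
    case 0 then show ?case by (simp add: pd_def)
  next
    case (Suc j)
    have xs: "Dx (pd 0 j l f) = pd 0 (Suc j) l f" "Dx (pd 0 j (Suc l) f) = pd 0 (Suc j) (Suc l) f"
      by (simp_all add: smooth_Dx_pd assms)
    have d: "diff3 (pd 0 j l f)" "diff3 (Dx (pd 0 j l f))" "diff3 (Dy (pd 0 j l f))" "diff3 (Dx (Dy (pd 0 j l f)))"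
      using assms unfolding smooth3_diff3 Suc xs by auto
    have "Dy (pd 0 (Suc j) l f) = Dy (Dx (pd 0 j l f))" by (simp add: xs)
    also have "\<dots> = Dx (Dy (pd 0 j l f))" by (rule comm_xy[OF d])
    also have "\<dots> = pd 0 (Suc j) (Suc l) f" by (simp add: Suc xs)
    finally show ?case .
  qed
next
  case (Suc i)
  have d: "diff3 (pd i j l f)" "diff3 (Dt (pd i j l f))" "diff3 (Dy (pd i j l f))" "diff3 (Dt (Dy (pd i j l f)))"
    using assms unfolding smooth3_diff3 Suc pd_Dt by auto
  have "Dy (pd (Suc i) j l f) = Dy (Dt (pd i j l f))" by (simp add: pd_Dt)
  also have "\<dots> = Dt (Dy (pd i j l f))" by (rule comm_ty[OF d])
  also have "\<dots> = pd (Suc i) j (Suc l) f" by (simp add: Suc pd_Dt)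
  finally show ?case .
qed

lemma pd_pd: assumes "smooth3 f" shows "pd i j l (pd a b c f) = pd (a+i) (b+j) (c+l) f"
proof -
  have y: "(Dy ^^ l) (pd a b c f) = pd a b (c+l) f" for l
    by (induction l) (simp_all add: smooth_Dy_pd[OF assms])
  have x: "(Dx ^^ j) (pd a b c' f) = pd a (b+j) c' f" for j c'
    by (induction j) (simp_all add: smooth_Dx_pd[OF assms])
  have t: "(Dt ^^ i) (pd a' b' c' f) = pd (a'+i) b' c' f" for i a' b' c'
    by (induction i) (simp_all add: pd_Dt)
  show ?thesis unfolding pd_def[of i j l] by (simp add: y x t)
qed

lemma smooth_pd: "smooth3 f \<Longrightarrow> smooth3 (pd a b c f)"
  unfolding smooth3_diff3[of "pd a b c f"] by (simp add: pd_pd) (simp add: smooth3_diff3)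

lemma pd_D_eq: "Dt f = pd 1 0 0 f" "Dx f = pd 0 1 0 f" "Dy f = pd 0 0 1 f"
  by (simp_all add: pd_def)

lemma smooth_D: "isD D \<Longrightarrow> smooth3 f \<Longrightarrow> smooth3 (D f)"
  unfolding isD_def using smooth_pd pd_D_eq by metis

lemma smooth_diff3: "smooth3 f \<Longrightarrow> diff3 f"
  unfolding smooth3_diff3 by (metis pd_def funpow_0)

lemma comm_smooth:
  assumes "smooth3 f"
  shows "Dx (Dy f) = Dy (Dx f)" "Dx (Dt f) = Dt (Dx f)" "Dy (Dt f) = Dt (Dy f)"
  using assms by (simp_all add: pd_D_eq pd_pd)

lemma pd_outer:
  assumes "i + j + l = Suc m"
  shows "\<exists>D i' j' l'. isD D \<and> i' + j' + l' = m \<and> (\<forall>h. pd i j l h = D (pd i' j' l' h))"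
proof (cases i)
  case (Suc i') then show ?thesis using assms by (intro exI[of _ Dt] exI[of _ i'] exI[of _ j] exI[of _ l]) (simp add: pd_Dt)
next
  case 0
  show ?thesis
  proof (cases j)
    case (Suc j') then show ?thesis using assms 0 by (intro exI[of _ Dx] exI[of _ 0] exI[of _ j'] exI[of _ l]) (simp add: pd_def)
  next
    assume j0: "j = 0"
    then obtain l' where "l = Suc l'" using assms `i = 0` by (cases l) auto
    then show ?thesis using assms 0 j0 by (intro exI[of _ Dy] exI[of _ 0] exI[of _ 0] exI[of _ l']) (simp add: pd_def)
  qed
qed

lemma pd_add_gen:
  assumes "\<And>i' j' l'. i' + j' + l' < i + j + l \<Longrightarrow> diff3 (pd i' j' l' A) \<and> diff3 (pd i' j' l' B)"
  shows "pd i j l (A + B) = pd i j l A + pd i j l B"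
  using assms
proof (induction "i + j + l" arbitrary: i j l)
  case 0 then show ?case by (simp add: pd_def)
next
  case (Suc m)
  obtain D i' j' l' where D: "isD D" "i' + j' + l' = m" "\<And>h. pd i j l h = D (pd i' j' l' h)"
    using pd_outer[OF Suc(2)[symmetric]] by blast
  have IH: "pd i' j' l' (A + B) = pd i' j' l' A + pd i' j' l' B"
    by (rule Suc(1)) (use D(2) Suc(2,3) in auto)
  have d: "diff3 (pd i' j' l' A)" "diff3 (pd i' j' l' B)" using Suc(3)[of i' j' l'] D(2) Suc(2) by auto
  show ?case unfolding D(3) IH by (rule D_deriv(1)[OF D(1) d])
qed

lemma smooth_add: assumes "smooth3 a" "smooth3 b" shows "smooth3 (a + b)"
  using assms unfolding smooth3_diff3
  by (subst pd_add_gen) (auto intro: diff3_add)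

lemma smooth_mult_aux:
  "\<forall>a b. smooth3 a \<longrightarrow> smooth3 b \<longrightarrow> (\<forall>i j l. i + j + l \<le> n \<longrightarrow> diff3 (pd i j l (a * b)))"
proof (induction n)
  case 0
  show ?case
  proof (intro allI impI)
    fix a b i j l assume ab: "smooth3 a" "smooth3 b" and le: "i + j + l \<le> (0::nat)"
    then have "pd i j l (a * b) = a * b" by (simp only: pd_def) simp
    then show "diff3 (pd i j l (a * b))" using ab smooth_diff3 diff3_mult by metis
  qed
next
  case (Suc m)
  show ?case
  proof (intro allI impI)
    fix a b i j l assume ab: "smooth3 a" "smooth3 b" and le: "i + j + l \<le> Suc m"
    show "diff3 (pd i j l (a * b))"
    proof (cases "i + j + l \<le> m")
      case True then show ?thesis using Suc ab by blast
    next
      case False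
      then have eq: "i + j + l = Suc m" using le by simp
      obtain D i' j' l' where D: "isD D" "i' + j' + l' = m" "\<And>h. pd i j l h = pd i' j' l' (D h)"
        using pd_peel[OF eq] by blast
      have sD: "smooth3 (D a)" "smooth3 (D b)" using smooth_D[OF D(1)] ab by auto
      have DD: "D (a * b) = D a * b + a * D b" by (rule D_deriv(2)[OF D(1)]) (use ab smooth_diff3 in auto)
      have IHa: "\<And>i j l. i+j+l \<le> m \<Longrightarrow> diff3 (pd i j l (D a * b))" using Suc.IH sD(1) ab(2) by blast
      have IHb: "\<And>i j l. i+j+l \<le> m \<Longrightarrow> diff3 (pd i j l (a * D b))" using Suc.IH sD(2) ab(1) by blast
      have "pd i' j' l' (D a * b + a * D b) = pd i' j' l' (D a * b) + pd i' j' l' (a * D b)"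
        by (rule pd_add_gen) (metis IHa IHb D(2) less_imp_le)
      moreover have "diff3 (pd i' j' l' (D a * b))" "diff3 (pd i' j' l' (a * D b))"
        using IHa IHb D(2) by auto
      ultimately show ?thesis unfolding D(3) DD by (simp add: diff3_add)
    qed
  qed
qed

lemma smooth_mult: "smooth3 a \<Longrightarrow> smooth3 b \<Longrightarrow> smooth3 (a * b)"
  using smooth_mult_aux unfolding smooth3_diff3 by blast

lemma smooth_const: "(\<And>t x y. f t x y = c) \<Longrightarrow> smooth3 f"
proof -
  assume f: "\<And>t x y. f t x y = c"
  have "pd i j l f = (if i + j + l = 0 then f else 0)" for i j l
  proof (induction "i + j + l" arbitrary: i j l)
    case 0 then show ?case by (simp add: pd_def)
  next
    case (Suc m)
    obtain D i' j' l' where D: "isD D" "i' + j' + l' = m" "\<And>h. pd i j l h = D (pd i' j' l' h)"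
      using pd_outer[OF Suc(2)[symmetric]] by blast
    have "\<And>t x y. pd i' j' l' f t x y = (if i' + j' + l' = 0 then c else 0)"
      using Suc(1)[OF D(2)[symmetric]] f by auto
    then have "D (pd i' j' l' f) = 0" by (rule D_const[OF D(1)])
    moreover have "i + j + l \<noteq> 0" using Suc(2) by linarith
    ultimately show ?case using D(3)[of f] by auto
  qed
  then show ?thesis unfolding smooth3_diff3 using f by (auto intro: diff3_const)
qed


unbundle no vec_syntax
unbundle fps_syntax




lemma smooth_num[simp]: "smooth3 (numeral n)" "smooth3 1" "smooth3 0"
proof -
  show "smooth3 (numeral n)" by (rule smooth_const[of _ "numeral n"]) simp
  show "smooth3 1" by (rule smooth_const[of _ 1]) simp
  show "smooth3 0" by (rule smooth_const[of _ 0]) simp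
qed

lemma D_num: "isD D \<Longrightarrow> D (numeral n) = 0" "isD D \<Longrightarrow> D 1 = 0" "isD D \<Longrightarrow> D 0 = 0"
proof -
  assume D: "isD D"
  show "D (numeral n) = 0" by (rule D_const[OF D, of _ "numeral n"]) simp
  show "D 1 = 0" by (rule D_const[OF D, of _ 1]) simp
  show "D 0 = 0" by (rule D_const[OF D, of _ 0]) simp
qed

lemma smooth_neg: "smooth3 a \<Longrightarrow> smooth3 (- a)"
proof -
  assume a: "smooth3 a"
  have "- a = (- 1) * a" by simp
  moreover have "smooth3 (- 1 :: field3)" by (rule smooth_const[of _ "-1"]) simp
  ultimately show ?thesis using smooth_mult a by metis
qed

lemma smooth_diff: "smooth3 a \<Longrightarrow> smooth3 b \<Longrightarrow> smooth3 (a - b)"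
  using smooth_add[of a "- b"] smooth_neg by simp

lemma D_neg: assumes "isD D" "smooth3 a" shows "D (- a) = - D a"
proof -
  have "D (a + - a) = D a + D (- a)"
    by (rule D_deriv(1)[OF assms(1) smooth_diff3[OF assms(2)] smooth_diff3[OF smooth_neg[OF assms(2)]]])
  then have "D a + D (- a) = 0" by (metis right_minus D_num(3)[OF assms(1)])
  then show ?thesis by (metis neg_eq_iff_add_eq_0 minus_minus)
qed

lemma D_add: "isD D \<Longrightarrow> smooth3 a \<Longrightarrow> smooth3 b \<Longrightarrow> D (a + b) = D a + D b"
  by (intro D_deriv) (auto intro: smooth_diff3)
lemma D_mult: "isD D \<Longrightarrow> smooth3 a \<Longrightarrow> smooth3 b \<Longrightarrow> D (a * b) = D a * b + a * D b"
  by (intro D_deriv) (auto intro: smooth_diff3)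
lemma D_diff: "isD D \<Longrightarrow> smooth3 a \<Longrightarrow> smooth3 b \<Longrightarrow> D (a - b) = D a - D b"
  using D_add[of D a "- b"] D_neg[of D b] smooth_neg[of b] by simp

lemma smooth_sum: "(\<And>i. i \<in> A \<Longrightarrow> smooth3 (f i)) \<Longrightarrow> smooth3 (sum f A)"
proof (induction A rule: infinite_finite_induct)
  case (insert x F)
  show ?case unfolding sum.insert[OF insert(1,2)] by (rule smooth_add) (use insert in auto)
qed simp_all

lemma D_sum: "isD D \<Longrightarrow> (\<And>i. i \<in> A \<Longrightarrow> smooth3 (f i)) \<Longrightarrow> D (sum f A) = (\<Sum>i\<in>A. D (f i))"
proof (induction A rule: infinite_finite_induct)
  case (insert x F)
  have s: "smooth3 (sum f F)" by (rule smooth_sum) (use insert in auto)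
  have "D (f x + sum f F) = D (f x) + D (sum f F)"
    by (rule D_add) (use insert s in auto)
  moreover have IH: "D (sum f F) = (\<Sum>i\<in>F. D (f i))" by (rule insert.IH) (use insert in auto)
  ultimately show ?case by (simp only: sum.insert[OF insert(1,2)])
next
  case (infinite A)
  then have "sum f A = 0" "(\<Sum>i\<in>A. D (f i)) = 0" by simp_all
  then show ?case using D_num(3)[OF infinite(2)] by simp
next
  case empty
  then show ?case using D_num(3)[OF empty(1)] by simp
qed

definition dm :: "(field3 \<Rightarrow> field3) \<Rightarrow> field3 fps \<Rightarrow> field3 fps" where
  "dm D F = Abs_fps (\<lambda>n. D (F $ n))"
definition sm :: "field3 fps \<Rightarrow> bool" where
  "sm F \<longleftrightarrow> (\<forall>n. smooth3 (F $ n))"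

lemma dm_nth[simp]: "dm D F $ n = D (F $ n)" by (simp add: dm_def)

lemma sm_add[intro]: "sm F \<Longrightarrow> sm G \<Longrightarrow> sm (F + G)" by (simp add: sm_def smooth_add)
lemma sm_diff[intro]: "sm F \<Longrightarrow> sm G \<Longrightarrow> sm (F - G)" by (simp add: sm_def smooth_diff)
lemma sm_neg[intro]: "sm F \<Longrightarrow> sm (- F)" by (simp add: sm_def smooth_neg)
lemma sm_mult[intro]: "sm F \<Longrightarrow> sm G \<Longrightarrow> sm (F * G)"
  by (auto simp: sm_def fps_mult_nth intro!: smooth_sum smooth_mult)
lemma sm_const[intro]: "smooth3 c \<Longrightarrow> sm (fps_const c)" by (simp add: sm_def)
lemma sm_X[intro]: "sm fps_X" by (simp add: sm_def)
lemma sm_one[intro]: "sm 1" by (simp add: sm_def)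
lemma sm_numeral[intro]: "sm (numeral n)" by (simp add: sm_def fps_numeral_nth)
lemma sm_dm[intro]: "isD D \<Longrightarrow> sm F \<Longrightarrow> sm (dm D F)" by (simp add: sm_def smooth_D)

lemma dm_add: "isD D \<Longrightarrow> sm F \<Longrightarrow> sm G \<Longrightarrow> dm D (F + G) = dm D F + dm D G"
  by (rule fps_ext, simp only: dm_nth fps_add_nth, rule D_add) (auto simp: sm_def)
lemma dm_diff: "isD D \<Longrightarrow> sm F \<Longrightarrow> sm G \<Longrightarrow> dm D (F - G) = dm D F - dm D G"
  by (rule fps_ext, simp only: dm_nth fps_sub_nth, rule D_diff) (auto simp: sm_def)
lemma dm_neg: "isD D \<Longrightarrow> sm F \<Longrightarrow> dm D (- F) = - dm D F"
  by (rule fps_ext, simp only: dm_nth fps_neg_nth, rule D_neg) (auto simp: sm_def)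
lemma dm_mult: assumes "isD D" "sm F" "sm G" shows "dm D (F * G) = dm D F * G + F * dm D G"
proof (rule fps_ext)
  fix n
  have "dm D (F * G) $ n = (\<Sum>i=0..n. D (F$i * G$(n-i)))"
    unfolding dm_nth fps_mult_nth by (rule D_sum[OF assms(1)]) (use assms in \<open>auto simp: sm_def intro: smooth_mult\<close>)
  also have "\<dots> = (\<Sum>i=0..n. D (F$i) * G$(n-i) + F$i * D (G$(n-i)))"
    by (rule sum.cong[OF refl], rule D_mult[OF assms(1)]) (use assms in \<open>auto simp: sm_def\<close>)
  also have "\<dots> = (dm D F * G + F * dm D G) $ n"
    by (simp only: fps_add_nth fps_mult_nth dm_nth sum.distrib)
  finally show "dm D (F * G) $ n = (dm D F * G + F * dm D G) $ n" .
qed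
lemma dm_const: "isD D \<Longrightarrow> dm D (fps_const c) = fps_const (D c)"
  by (rule fps_ext) (simp add: D_num[of D] fun_eq_iff)
lemma dm_X: "isD D \<Longrightarrow> dm D fps_X = 0" by (rule fps_ext) (simp add: D_num[of D] fun_eq_iff)
lemma dm_one: "isD D \<Longrightarrow> dm D 1 = 0" by (rule fps_ext) (simp add: D_num[of D] fun_eq_iff)
lemma dm_numeral: "isD D \<Longrightarrow> dm D (numeral n) = 0" by (rule fps_ext) (simp add: fps_numeral_nth D_num[of D] fun_eq_iff)
lemma dm_Xmult: "isD D \<Longrightarrow> sm F \<Longrightarrow> dm D (fps_X * F) = fps_X * dm D F"
  by (rule fps_ext) (simp add: D_num[of D] fun_eq_iff)

lemma dm_comm: assumes "sm F"
  shows "dm Dx (dm Dy F) = dm Dy (dm Dx F)" "dm Dx (dm Dt F) = dm Dt (dm Dx F)"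
  using assms by (simp_all add: fps_eq_iff sm_def comm_smooth)

lemma X_cancel: assumes h: "fps_X * (A :: field3 fps) = fps_X * B" shows "A = B"
proof (rule fps_ext)
  fix n
  have "(fps_X * A) $ Suc n = (fps_X * B) $ Suc n" using h by simp
  then show "A $ n = B $ n" by simp
qed

lemma two_cancel: assumes h: "(2 :: field3 fps) * A = 2 * B" shows "A = B"
proof (rule fps_ext)
  fix n
  have "((2 :: field3 fps) * A) $ n = ((2 :: field3 fps) * B) $ n" using h by simp
  then have e: "2 * A $ n = 2 * B $ n"
    by (simp only: numeral_fps_const fps_const_mult_left fps_nth_Abs_fps)
  show "A $ n = B $ n"
  proof (intro ext)
    fix t x y
    have "(2 * A $ n) t x y = (2 * B $ n) t x y" using e by simp
    then show "(A $ n) t x y = (B $ n) t x y" by simp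
  qed
qed

definition low :: "nat \<Rightarrow> field3 fps \<Rightarrow> bool" where
  "low m F \<longleftrightarrow> (\<forall>j<m. F $ j = 0)"

lemma low_mult: "low m G \<Longrightarrow> low m (F * G)"
  by (auto simp: low_def fps_mult_nth intro!: sum.neutral)
lemma low_mult2: "low m F \<Longrightarrow> low m (F * G)"
  using low_mult[of m F G] by (simp add: mult.commute)
lemma low_add: "low m F \<Longrightarrow> low m G \<Longrightarrow> low m (F + G)" by (simp add: low_def)
lemma low_diff: "low m F \<Longrightarrow> low m G \<Longrightarrow> low m (F - G)" by (simp add: low_def)
lemma low_dm: "isD D \<Longrightarrow> low m F \<Longrightarrow> low m (dm D F)"
  unfolding low_def dm_nth by (metis D_num(3))

lemma vanish:
  assumes R0: "R $ 0 = 1" and eq: "R * F = fps_X * G"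
    and lowG: "\<And>m. low m F \<Longrightarrow> low m G"
  shows "F = 0"
proof -
  have "low n F" for n
  proof (induction n)
    case 0 then show ?case by (simp add: low_def)
  next
    case (Suc n)
    have lG: "low n G" using lowG Suc by blast
    have "(R * F) $ n = (\<Sum>i=0..n. R$i * F$(n-i))" by (simp add: fps_mult_nth)
    also have "\<dots> = R$0 * F$n"
    proof -
      have "(\<Sum>i=0..n. R$i * F$(n-i)) = R$0 * F$(n-0) + (\<Sum>i=Suc 0..n. R$i * F$(n-i))"
        by (simp add: sum.atLeast_Suc_atMost)
      moreover have "(\<Sum>i=Suc 0..n. R$i * F$(n-i)) = 0"
        using Suc by (intro sum.neutral) (auto simp: low_def)
      ultimately show ?thesis by simp
    qed
    finally have "(R * F) $ n = F $ n" using R0 by simp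
    moreover have "(fps_X * G) $ n = 0" using lG by (auto simp: low_def)
    ultimately have "F $ n = 0" using eq by simp
    then show ?case using Suc by (auto simp: low_def less_Suc_eq)
  qed
  then show ?thesis by (auto simp: fps_eq_iff low_def)
qed



abbreviation cf :: "field3 \<Rightarrow> field3 fps" where "cf \<equiv> fps_const"

lemmas sm_simps[simp] = sm_add sm_diff sm_neg sm_mult sm_const sm_X sm_one sm_numeral sm_dm
lemmas dm_simps = dm_add dm_diff dm_neg dm_mult dm_const dm_X dm_one dm_numeral dm_Xmult
declare fps_const_neg[simp del] fps_const_add[simp del] fps_const_sub[simp del] fps_const_mult[simp del] fps_const_power[simp del]

locale cbs =
  fixes u :: field3
  assumes sol: "CBS_solution u"
begin

definition "v = Dx u"
definition "w = Dy u"
definition "vy = Dx w"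

lemma su: "smooth3 u" using sol by (simp add: CBS_solution_def)

lemma smooth_fields[simp]: "smooth3 v" "smooth3 w" "smooth3 vy" "smooth3 (Dx v)" "smooth3 (Dx vy)"
  "smooth3 (Dx (Dx vy))" "smooth3 (Dt v)"
  unfolding v_def w_def vy_def using su by (simp_all add: smooth_D)

lemma Dy_v: "Dy v = vy"
  unfolding v_def vy_def w_def using comm_smooth(1)[OF su] by simp

definition Bf :: "field3 fps \<Rightarrow> field3 fps \<Rightarrow> field3 fps" where
  "Bf A C = A * dm Dx (dm Dx C) + C * dm Dx (dm Dx A) - dm Dx A * dm Dx C - 4 * cf v * A * C"
definition Lf :: "field3 fps \<Rightarrow> field3 fps" where
  "Lf A = dm Dx (dm Dx (dm Dx A)) - 4 * cf v * dm Dx A - 2 * cf (Dx v) * A"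

lemma I1: assumes "sm A" shows "dm Dx (Bf A A) = 2 * A * Lf A"
  using assms by (simp add: Bf_def Lf_def dm_simps algebra_simps)

lemma Dx_w: "Dx w = vy" by (simp add: vy_def)

lemma smooth_fields2[simp]: "smooth3 (Dt v)" "smooth3 (Dx (Dx v))" "smooth3 (Dy vy)" "smooth3 (Dt w)" "smooth3 (Dx (Dx (Dx vy)))"
  unfolding v_def w_def vy_def using su by (simp_all add: smooth_D)

lemma comm_sm[simp]: "sm F \<Longrightarrow> dm Dy (dm Dx F) = dm Dx (dm Dy F)" "sm F \<Longrightarrow> dm Dt (dm Dx F) = dm Dx (dm Dt F)"
  by (simp_all add: dm_comm)

definition dN :: "field3 fps \<Rightarrow> field3 fps" where
  "dN A = dm Dt A - 2 * cf w * dm Dx A"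
definition Kf :: "field3 fps \<Rightarrow> field3 fps \<Rightarrow> field3 fps" where
  "Kf A C = 2 * cf (Dx vy) * (A * dm Dx C + C * dm Dx A) + 4 * cf vy * (A * dm Dx (dm Dx C) + C * dm Dx (dm Dx A))
     - 4 * cf vy * dm Dx A * dm Dx C - 4 * (cf (Dt v) - 2 * cf w * cf (Dx v)) * A * C"

lemma sm_dN[simp]: "sm A \<Longrightarrow> sm (dN A)" by (simp add: dN_def)
lemma sm_Bf[simp]: "sm A \<Longrightarrow> sm C \<Longrightarrow> sm (Bf A C)" by (simp add: Bf_def)

lemma Bf_sym: "Bf A C = Bf C A" by (simp add: Bf_def algebra_simps)

lemma I2: assumes "sm A" "sm C"
  shows "dm Dy (Bf A C) = Bf (dm Dy A) C + Bf A (dm Dy C) - 4 * cf vy * A * C"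
  using assms by (simp add: Bf_def dm_simps Dy_v algebra_simps)

lemma I3: assumes "sm A" "sm C" shows "dN (A * C) = dN A * C + A * dN C"
  using assms by (simp add: dN_def dm_simps algebra_simps)

lemma I5: assumes "sm A" "sm C"
  shows "dN (Bf A C) = Bf (dN A) C + Bf A (dN C) + Kf A C"
  using assms by (simp add: Bf_def dN_def Kf_def dm_simps Dx_w algebra_simps)

lemma cbs_eq: "Dt v = 2 * w * Dx v + 4 * v * vy - Dx (Dx vy)"
proof (intro ext)
  fix t x y
  have e: "pd 1 1 0 u t x y = 2 * pd 0 0 1 u t x y * pd 0 2 0 u t x y
        + 4 * pd 0 1 0 u t x y * pd 0 1 1 u t x y - pd 0 3 1 u t x y"
    using sol by (simp add: CBS_solution_def)
  have p: "pd 1 1 0 u = Dt v" "pd 0 0 1 u = w" "pd 0 2 0 u = Dx v" "pd 0 1 0 u = v"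
    "pd 0 1 1 u = vy" "pd 0 3 1 u = Dx (Dx vy)"
    by (simp_all add: pd_def v_def w_def vy_def eval_nat_numeral)
  show "Dt v t x y = (2 * w * Dx v + 4 * v * vy - Dx (Dx vy)) t x y"
    using e unfolding p by simp
qed

lemma cbs_fps: "cf (Dt v) = 2 * cf w * cf (Dx v) + 4 * cf v * cf vy - cf (Dx (Dx vy))"
  by (simp add: cbs_eq numeral_fps_const fps_const_mult fps_const_add fps_const_sub)

lemma I6: assumes "sm A" shows "Kf A A = 4 * Bf A (cf vy * A)"
  using assms by (simp add: Bf_def Kf_def dm_simps cbs_fps algebra_simps)

lemma Bf_lin: assumes "sm A" "sm F" "sm G"
  shows "Bf A (F - G) = Bf A F - Bf A G" "Bf A (F + G) = Bf A F + Bf A G"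
    "Bf A (fps_X * F) = fps_X * Bf A F" "Bf A (2 * F) = 2 * Bf A F"
  using assms by (simp_all add: Bf_def dm_simps algebra_simps)

lemma dN_lin: assumes "sm F" shows "dN (1 + fps_X * F) = fps_X * dN F"
  using assms by (simp add: dN_def dm_simps algebra_simps)

lemma xrec: assumes sR: "sm R" and R0: "R $ 0 = 1" and RR: "R * R = 1 + fps_X * Bf R R"
  shows "dm Dx R = fps_X * Lf R"
proof -
  have "dm Dx (R * R) = dm Dx (1 + fps_X * Bf R R)" using RR by simp
  then have "2 * (R * dm Dx R) = fps_X * (2 * R * Lf R)"
    using sR by (simp add: dm_simps I1 algebra_simps)
  then have "2 * (R * (dm Dx R - fps_X * Lf R)) = 2 * (fps_X * 0)" by (simp add: algebra_simps)
  then have "R * (dm Dx R - fps_X * Lf R) = fps_X * 0" by (rule two_cancel)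
  then have "dm Dx R - fps_X * Lf R = 0" by (rule vanish[OF R0]) (simp add: low_def)
  then show ?thesis by simp
qed

lemma low_Bf: "low m E \<Longrightarrow> low m (Bf R E)"
  unfolding Bf_def
  by (intro low_diff low_add low_mult low_mult2 low_dm isD_simps)

lemma yrec: assumes sR: "sm R" and R0: "R $ 0 = 1" and RR: "R * R = 1 + fps_X * Bf R R"
  shows "Dy (R $ Suc m) = - (Dt (R $ m) - 2 * w * Dx (R $ m) + 2 * vy * R $ m)"
proof -
  define M where "M = dN R + 2 * cf vy * R"
  define E where "E = Abs_fps (\<lambda>m. Dy (R $ Suc m) + M $ m)"
  have sM: "sm M" using sR by (simp add: M_def)
  have sE: "sm E" unfolding sm_def E_def fps_nth_Abs_fps
  proof
    fix n show "smooth3 (Dy (R $ Suc n) + M $ n)"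
      using sR sM unfolding sm_def by (metis smooth_add smooth_D isD_simps(3))
  qed
  have XE: "fps_X * E = dm Dy R + fps_X * M"
  proof (rule fps_ext)
    fix n show "(fps_X * E) $ n = (dm Dy R + fps_X * M) $ n"
    proof (cases n)
      case 0
      have "(dm Dy R) $ 0 = 0" by (simp only: dm_nth R0 D_num(2)[OF isD_simps(3)])
      then show ?thesis using 0 by (simp add: fun_eq_iff)
    qed (simp add: E_def)
  qed
  then have dYR: "dm Dy R = fps_X * (E - M)" by (simp add: algebra_simps)
  have "dm Dy (R * R) = dm Dy (1 + fps_X * Bf R R)" using RR by simp
  then have "2 * R * dm Dy R = fps_X * (2 * Bf R (dm Dy R) - 4 * cf vy * R * R)"
    using sR by (simp add: dm_simps I2 algebra_simps Bf_sym[of "dm Dy R" R])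
  then have "2 * R * (fps_X * (E - M)) = fps_X * (2 * (fps_X * (Bf R E - Bf R M)) - 4 * cf vy * R * R)"
    using sR sE sM by (simp add: dYR Bf_lin)
  then have "fps_X * (2 * R * (E - M)) = fps_X * (2 * fps_X * (Bf R E - Bf R M) - 4 * cf vy * R * R)"
    by (simp add: algebra_simps)
  then have eqY: "2 * R * (E - M) = 2 * fps_X * (Bf R E - Bf R M) - 4 * cf vy * R * R"
    by (rule X_cancel)
  have "dN (R * R) = dN (1 + fps_X * Bf R R)" using RR by simp
  then have eqN: "2 * R * dN R = fps_X * (2 * Bf R (dN R) + 4 * Bf R (cf vy * R))"
    using sR by (simp add: I3 dN_lin I5 I6 algebra_simps Bf_sym[of "dN R" R])
  have BM: "Bf R M = Bf R (dN R) + 2 * Bf R (cf vy * R)"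
    using sR by (simp add: M_def Bf_lin mult.assoc)
  have "2 * (R * E) = 2 * R * (E - M) + 2 * R * M" by (simp add: algebra_simps)
  also have "\<dots> = (2 * fps_X * (Bf R E - Bf R M) - 4 * cf vy * R * R) + (2 * R * dN R + 4 * cf vy * R * R)"
    unfolding eqY by (simp add: M_def algebra_simps)
  also have "\<dots> = 2 * fps_X * (Bf R E - Bf R M) + fps_X * (2 * Bf R (dN R) + 4 * Bf R (cf vy * R))"
    unfolding eqN by simp
  also have "\<dots> = 2 * (fps_X * Bf R E)"
    unfolding BM by (simp add: algebra_simps)
  finally have "2 * (R * E) = 2 * (fps_X * Bf R E)" .
  then have "R * E = fps_X * Bf R E" by (rule two_cancel)
  then have "E = 0" by (rule vanish[OF R0]) (rule low_Bf)
  then have "E $ m = 0" by simp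
  then have e: "Dy (R $ Suc m) + M $ m = 0" by (simp add: E_def)
  have h: "(2 * cf c * F) $ m = 2 * c * F $ m" for c F
  proof -
    have "2 * cf c = cf (2 * c)" by (simp add: numeral_fps_const fps_const_mult)
    then show ?thesis by (simp only: fps_const_mult_left fps_nth_Abs_fps)
  qed
  have "M $ m = Dt (R $ m) - 2 * w * Dx (R $ m) + 2 * vy * R $ m"
    unfolding M_def dN_def by (simp only: fps_add_nth fps_sub_nth h dm_nth)
  then have "Dy (R $ Suc m) + (Dt (R $ m) - 2 * w * Dx (R $ m) + 2 * vy * R $ m) = 0" using e by simp
  then show ?thesis by (metis add.commute add_eq_0_iff2 minus_unique)
qed

end



datatype dp = Cst real | Vr nat | Add dp dp | Mul dp dp

fun evj :: "dp \<Rightarrow> (nat \<times> nat \<times> nat \<Rightarrow> real) \<Rightarrow> real" where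
  "evj (Cst c) J = c"
| "evj (Vr j) J = J (0, Suc j, 0)"
| "evj (Add p q) J = evj p J + evj q J"
| "evj (Mul p q) J = evj p J * evj q J"

fun dxs :: "dp \<Rightarrow> dp" where
  "dxs (Cst c) = Cst 0"
| "dxs (Vr j) = Vr (Suc j)"
| "dxs (Add p q) = Add (dxs p) (dxs q)"
| "dxs (Mul p q) = Add (Mul (dxs p) q) (Mul p (dxs q))"

fun vs :: "dp \<Rightarrow> nat set" where
  "vs (Cst c) = {}"
| "vs (Vr j) = {j}"
| "vs (Add p q) = vs p \<union> vs q"
| "vs (Mul p q) = vs p \<union> vs q"

lemma finite_vs: "finite (vs p)" by (induction p) auto

lemma evj_local: "(\<And>j. j \<in> vs p \<Longrightarrow> J (0, Suc j, 0) = J' (0, Suc j, 0)) \<Longrightarrow> evj p J = evj p J'"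
  by (induction p) auto

definition psum :: "dp list \<Rightarrow> dp" where "psum ps = foldr Add ps (Cst 0)"

lemma evj_psum: "evj (psum ps) J = (\<Sum>p\<leftarrow>ps. evj p J)"
  unfolding psum_def by (induction ps) auto

definition Bs :: "dp \<Rightarrow> dp \<Rightarrow> dp" where
  "Bs a b = Add (Add (Mul (Cst 2) (Mul a (dxs (dxs b)))) (Mul (Cst (-1)) (Mul (dxs a) (dxs b))))
                (Mul (Cst (-4)) (Mul (Vr 0) (Mul a b)))"

fun r :: "nat \<Rightarrow> dp" where
  "r 0 = Cst 1"
| "r (Suc n) = Mul (Cst (1/2)) (Add (psum (map (\<lambda>i. Bs (r i) (r (n - i))) [0..<Suc n]))
                   (Mul (Cst (-1)) (psum (map (\<lambda>i. Mul (r i) (r (Suc n - i))) [1..<Suc n]))))"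

declare r.simps(2)[simp del]

definition fev :: "dp \<Rightarrow> field3 \<Rightarrow> field3" where
  "fev p u = (\<lambda>t x y. evj p (jet u t x y))"

lemma fev_simps:
  "fev (Cst c) u = (\<lambda>_ _ _. c)"
  "fev (Vr j) u = pd 0 (Suc j) 0 u"
  "fev (Add p q) u = fev p u + fev q u"
  "fev (Mul p q) u = fev p u * fev q u"
  by (auto simp: fev_def jet_def fun_eq_iff)

lemmas Dx_add = D_add[OF isD_simps(2)] and Dx_mult = D_mult[OF isD_simps(2)]

lemma fev_smooth: "smooth3 u \<Longrightarrow> smooth3 (fev p u)"
proof (induction p)
  case (Cst c) show ?case unfolding fev_simps by (rule smooth_const[of _ c]) simp
next
  case (Vr j) then show ?case unfolding fev_simps by (rule smooth_pd)
next
  case (Add p q) then show ?case unfolding fev_simps by (intro smooth_add)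
next
  case (Mul p q) then show ?case unfolding fev_simps by (intro smooth_mult)
qed

lemma fev_Dx: "smooth3 u \<Longrightarrow> Dx (fev p u) = fev (dxs p) u"
proof (induction p)
  case (Cst c)
  have "Dx (fev (Cst c) u) = 0" unfolding fev_simps by (rule D_const[OF isD_simps(2), of _ c]) simp
  moreover have "fev (Cst 0) u = 0" by (simp add: fev_simps fun_eq_iff)
  ultimately show ?case by simp
next
  case (Vr j) then show ?case unfolding fev_simps dxs.simps by (simp add: pd_def)
next
  case (Add p q)
  have "Dx (fev p u + fev q u) = Dx (fev p u) + Dx (fev q u)" by (rule Dx_add) (use Add fev_smooth in auto)
  then show ?case by (simp only: fev_simps dxs.simps Add.IH[OF Add.prems])
next
  case (Mul p q)
  have "Dx (fev p u * fev q u) = Dx (fev p u) * fev q u + fev p u * Dx (fev q u)" by (rule Dx_mult) (use Mul fev_smooth in auto)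
  then show ?case by (simp only: fev_simps dxs.simps Mul.IH[OF Mul.prems])
qed

lemma fev_psum: "fev (psum ps) u = (\<Sum>p\<leftarrow>ps. fev p u)"
  unfolding psum_def by (induction ps) (auto simp: fev_simps fun_eq_iff)

lemma fev_one: "fev (Cst 1) u = 1" by (simp add: fev_simps fun_eq_iff)

lemma fev_psum_map: "fev (psum (map f [a..<b])) u = (\<Sum>i\<in>{a..<b}. fev (f i) u)"
  unfolding fev_psum by (simp add: sum_set_upt_conv_sum_list_nat[symmetric] o_def)

context cbs
begin

definition R :: "field3 fps" where "R = Abs_fps (\<lambda>n. fev (r n) u)"

lemma R_nth: "R $ n = fev (r n) u" by (simp add: R_def)

lemma sR: "sm R" unfolding sm_def R_nth using su by (simp add: fev_smooth)

lemma R0: "R $ 0 = 1" unfolding R_nth by (simp add: fev_simps fun_eq_iff)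

lemma v_fev: "fev (Vr 0) u = v" by (simp add: fev_simps pd_def v_def)

lemma fev_Bs: "fev (Bs a b) u = 2 * (fev a u * Dx (Dx (fev b u))) - Dx (fev a u) * Dx (fev b u) - 4 * (v * (fev a u * fev b u))"
proof -
  have c: "(\<lambda>_ _ _. 2) = (2::field3)" "(\<lambda>_ _ _. -1) = (-1::field3)" "(\<lambda>_ _ _. -4) = (-4::field3)"
    by (simp_all add: fun_eq_iff)
  have p: "pd 0 (Suc 0) 0 u = v" by (simp add: pd_def v_def)
  show ?thesis unfolding Bs_def fev_simps c fev_Dx[OF su] p by (simp add: algebra_simps)
qed

lemma RR: "R * R = 1 + fps_X * Bf R R"
proof (rule fps_ext)
  fix n
  show "(R * R) $ n = (1 + fps_X * Bf R R) $ n"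
  proof (cases n)
    case 0 then show ?thesis using R0 by (simp add: fps_mult_nth)
  next
    case (Suc m)
    define SB where "SB = (\<Sum>i\<in>{0..<Suc m}. fev (Bs (r i) (r (m - i))) u)"
    define SI where "SI = (\<Sum>i\<in>{1..<Suc m}. fev (r i) u * fev (r (Suc m - i)) u)"
    have rS: "R $ Suc m = (\<lambda>_ _ _. 1/2) * (SB + (\<lambda>_ _ _. -1) * SI)"
      unfolding R_nth r.simps fev_simps fev_psum_map SB_def SI_def ..
    have key: "2 * R $ Suc m + SI = SB" unfolding rS by (simp add: fun_eq_iff field_simps)
    have "(R * R) $ Suc m = (\<Sum>i=0..Suc m. R $ i * R $ (Suc m - i))" by (simp add: fps_mult_nth)
    also have "\<dots> = (\<Sum>i=0..m. R $ i * R $ (Suc m - i)) + R $ Suc m * R $ 0"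
      by (simp add: sum.atLeast0_atMost_Suc)
    also have "\<dots> = R $ 0 * R $ Suc m + (\<Sum>i=Suc 0..m. R $ i * R $ (Suc m - i)) + R $ Suc m * R $ 0"
      by (simp add: sum.atLeast_Suc_atMost)
    also have "\<dots> = 2 * R $ Suc m + SI"
      unfolding SI_def R0 R_nth by (simp add: atLeastLessThanSuc_atLeastAtMost fev_one)
    also have "\<dots> = SB" by (rule key)
    also have "\<dots> = Bf R R $ m"
    proof -
      have e: "Bf R R = cf 2 * (R * dm Dx (dm Dx R)) - dm Dx R * dm Dx R - cf (4 * v) * (R * R)"
        unfolding Bf_def fps_const_mult[symmetric] numeral_fps_const[symmetric] by (simp add: algebra_simps)
      have "Bf R R $ m = 2 * (\<Sum>i=0..m. R $ i * Dx (Dx (R $ (m - i)))) - (\<Sum>i=0..m. Dx (R $ i) * Dx (R $ (m - i))) - 4 * v * (\<Sum>i=0..m. R $ i * R $ (m - i))"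
        unfolding e by (simp only: fps_sub_nth fps_const_mult_left fps_nth_Abs_fps fps_mult_nth dm_nth)
      also have "\<dots> = (\<Sum>i=0..m. 2 * (R $ i * Dx (Dx (R $ (m - i)))) - Dx (R $ i) * Dx (R $ (m - i)) - 4 * (v * (R $ i * R $ (m - i))))"
        by (simp add: sum_subtractf sum_distrib_left mult.assoc)
      finally have "Bf R R $ m = \<dots>" .
      then show ?thesis unfolding SB_def fev_Bs R_nth atLeastLessThanSuc_atLeastAtMost by simp
    qed
    finally show ?thesis using Suc by simp
  qed
qed

end



lemma Dx_scale: "smooth3 f \<Longrightarrow> Dx (\<lambda>t x y. c * f t x y) = (\<lambda>t x y. c * Dx f t x y)"
  by (auto simp: fun_eq_iff Dx_def intro!: DERIV_imp_deriv DERIV_cmult diff3_Dx[unfolded Dx_def] smooth_diff3)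
lemma Dy_scale: "smooth3 f \<Longrightarrow> Dy (\<lambda>t x y. c * f t x y) = (\<lambda>t x y. c * Dy f t x y)"
  by (auto simp: fun_eq_iff Dy_def intro!: DERIV_imp_deriv DERIV_cmult diff3_Dy[unfolded Dy_def] smooth_diff3)
lemma Dt_scale: "smooth3 f \<Longrightarrow> Dt (\<lambda>t x y. c * f t x y) = (\<lambda>t x y. c * Dt f t x y)"
  by (auto simp: fun_eq_iff Dt_def intro!: DERIV_imp_deriv DERIV_cmult diff3_Dt[unfolded Dt_def] smooth_diff3)

definition chi :: "nat \<Rightarrow> jetfun" where
  "chi k = (\<lambda>t x y J. - (1/2) * evj (r (Suc k)) J)"

lemma chi0: "chi 0 t x y J = J (0, 1, 0)"
  by (simp add: chi_def r.simps(2) psum_def Bs_def)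

lemma chi_local: "local_fun (chi k)"
  unfolding local_fun_def
proof (intro exI conjI allI impI)
  show "finite ((\<lambda>j. (0::nat, Suc j, 0::nat)) ` vs (r (Suc k)))" by (simp add: finite_vs)
  fix t x y and J J' :: "nat \<times> nat \<times> nat \<Rightarrow> real"
  assume "\<forall>\<sigma>\<in>(\<lambda>j. (0::nat, Suc j, 0::nat)) ` vs (r (Suc k)). J \<sigma> = J' \<sigma>"
  then have "evj (r (Suc k)) J = evj (r (Suc k)) J'" by (intro evj_local) auto
  then show "chi k t x y J = chi k t x y J'" by (simp add: chi_def)
qed

context cbs
begin

lemma eval_chi: "eval_on (chi k) u = (\<lambda>t x y. - (1/2) * (R $ Suc k) t x y)"
  by (simp add: eval_on_def chi_def R_nth fev_def)

lemma smR[simp]: "smooth3 (R $ n)" using sR by (simp add: sm_def)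

lemma main_k: "smooth3 (eval_on (chi k) u) \<and>
   recursion_R0 u (eval_on (chi k) u) (\<lambda>t x y. - eval_on (chi (Suc k)) u t x y)"
proof
  have c: "(\<lambda>t x y. - (1/2) * (R $ Suc k) t x y) = (\<lambda>_ _ _. - (1/2)) * R $ Suc k" by (simp add: fun_eq_iff)
  show "smooth3 (eval_on (chi k) u)" unfolding eval_chi c
    by (rule smooth_mult) (auto intro: smooth_const)
next
  define A where "A = R $ Suc k"
  define B where "B = R $ Suc (Suc k)"
  have sA: "smooth3 A" "smooth3 (Dx A)" "smooth3 (Dx (Dx A))" "smooth3 B"
    unfolding A_def B_def by (simp_all add: smooth_D)
  have psi: "(\<lambda>t x y. - eval_on (chi (Suc k)) u t x y) = (\<lambda>t x y. (1/2) * B t x y)"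
    by (simp add: eval_chi B_def)
  have phi: "eval_on (chi k) u = (\<lambda>t x y. - (1/2) * A t x y)" by (simp add: eval_chi A_def)
  have h4: "(numeral c * cf a * F) $ m = numeral c * a * F $ m" for c a F m
  proof -
    have "numeral c * cf a = cf (numeral c * a)" by (simp add: numeral_fps_const fps_const_mult)
    then show ?thesis by (simp only: fps_const_mult_left fps_nth_Abs_fps)
  qed
  have "dm Dx R $ Suc (Suc k) = (fps_X * Lf R) $ Suc (Suc k)" using xrec[OF sR R0 RR] by simp
  then have xB: "Dx B = Dx (Dx (Dx A)) - 4 * v * Dx A - 2 * Dx v * A"
    unfolding A_def B_def Lf_def by (simp only: dm_nth fps_X_mult_nth fps_sub_nth h4) simp
  have yB: "Dy B = - (Dt A - 2 * w * Dx A + 2 * vy * A)"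
    unfolding A_def B_def by (rule yrec[OF sR R0 RR])
  have p: "pd 0 1 0 u = v" "pd 0 2 0 u = Dx v" "pd 0 0 1 u = w" "pd 0 1 1 u = vy"
    by (simp_all add: pd_def v_def w_def vy_def eval_nat_numeral)
  have D3: "(Dx ^^ 3) f = Dx (Dx (Dx f))" for f by (simp add: eval_nat_numeral)
  show "recursion_R0 u (eval_on (chi k) u) (\<lambda>t x y. - eval_on (chi (Suc k)) u t x y)"
    unfolding recursion_R0_def psi phi p D3
  proof (intro allI conjI)
    fix t x y
    have "Dx B t x y = Dx (Dx (Dx A)) t x y - 4 * v t x y * Dx A t x y - 2 * Dx v t x y * A t x y"
      using xB by (simp add: fun_eq_iff)
    then show "Dx (\<lambda>t x y. 1 / 2 * B t x y) t x y =
         4 * v t x y * Dx (\<lambda>t x y. - (1 / 2) * A t x y) t x y + 2 * Dx v t x y * (- (1 / 2) * A t x y) -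
         Dx (Dx (Dx (\<lambda>t x y. - (1 / 2) * A t x y))) t x y"
      unfolding Dx_scale[OF sA(4)] Dx_scale[OF sA(1)] Dx_scale[OF sA(2)] Dx_scale[OF sA(3)]
      by (simp add: algebra_simps)
  next
    fix t x y
    have "Dy B t x y = - (Dt A t x y - 2 * w t x y * Dx A t x y + 2 * vy t x y * A t x y)"
      using yB by (simp add: fun_eq_iff)
    then show "Dy (\<lambda>t x y. 1 / 2 * B t x y) t x y =
         Dt (\<lambda>t x y. - (1 / 2) * A t x y) t x y - 2 * w t x y * Dx (\<lambda>t x y. - (1 / 2) * A t x y) t x y +
         2 * vy t x y * (- (1 / 2) * A t x y)"
      unfolding Dy_scale[OF sA(4)] Dx_scale[OF sA(1)] Dt_scale[OF sA(1)]
      by (simp add: algebra_simps)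
  qed
qed

end

theorem proposition2:
  "\<exists>chi :: nat \<Rightarrow> jetfun.
      (\<forall>t x y J. chi 0 t x y J = J (0, 1, 0))
    \<and> (\<forall>k. local_fun (chi k))
    \<and> (\<forall>k u. CBS_solution u \<longrightarrow>
          smooth3 (eval_on (chi k) u)
        \<and> recursion_R0 u (eval_on (chi k) u) (\<lambda>t x y. - eval_on (chi (Suc k)) u t x y))"
proof (intro exI[of _ chi] conjI allI impI)
  show "chi 0 t x y J = J (0, 1, 0)" for t x y J by (rule chi0)
  show "local_fun (chi k)" for k by (rule chi_local)
  fix k u assume "CBS_solution u"
  then interpret cbs u by unfold_locales
  from main_k[of k] show "smooth3 (eval_on (chi k) u)"
    "recursion_R0 u (eval_on (chi k) u) (\<lambda>t x y. - eval_on (chi (Suc k)) u t x y)" by auto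
qed


end
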